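(* For rankings $\succ$, $R$ and $R'$ on a finite set $\mathcal{X}$, the following are equivalent: (1) $R$ is more aligned with $\succ$ than $R'$; (2) for every non-empty $X\subseteq\mathcal{X}$, the $R$-highest alternative in $X$ is identical to or $\succ$-better than the $R'$-highest alternative in $X$.
   Context: A ranking on $\mathcal{X}$ is an irreflexive, transitive and total binary relation. $R$ is more aligned with $\succ$ than $R'$ if for all $x,y\in\mathcal{X}$ with $x\succ y$, $xR'y$ implies $xRy$. The $R$-highest alternative in $X$ is the $x\in X$ with $xRy$ for all $y\in X\setminus\{x\}$. *)

theory Defs
  imports Main
begin

definition ranking :: "'a set \<Rightarrow> ('a \<Rightarrow> 'a \<Rightarrow> bool) \<Rightarrow> bool" where
  "ranking A R \<longleftrightarrow>
     (\<forall>x\<in>A. \<not> R x x) \<and>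
     (\<forall>x\<in>A. \<forall>y\<in>A. \<forall>z\<in>A. R x y \<longrightarrow> R y z \<longrightarrow> R x z) \<and>
     (\<forall>x\<in>A. \<forall>y\<in>A. x \<noteq> y \<longrightarrow> R x y \<or> R y x)"

definition more_aligned :: "'a set \<Rightarrow> ('a \<Rightarrow> 'a \<Rightarrow> bool) \<Rightarrow> ('a \<Rightarrow> 'a \<Rightarrow> bool)
     \<Rightarrow> ('a \<Rightarrow> 'a \<Rightarrow> bool) \<Rightarrow> bool" where
  "more_aligned A P R R' \<longleftrightarrow> (\<forall>x\<in>A. \<forall>y\<in>A. P x y \<longrightarrow> R' x y \<longrightarrow> R x y)"

definition highest :: "('a \<Rightarrow> 'a \<Rightarrow> bool) \<Rightarrow> 'a set \<Rightarrow> 'a" where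
  "highest R X = (THE x. x \<in> X \<and> (\<forall>y\<in>X - {x}. R x y))"

end

theory Submission
  imports Defs
begin

lemma rk_irr: "ranking A R \<Longrightarrow> x \<in> A \<Longrightarrow> \<not> R x x"
  unfolding ranking_def by blast
lemma rk_trans: "ranking A R \<Longrightarrow> x \<in> A \<Longrightarrow> y \<in> A \<Longrightarrow> z \<in> A \<Longrightarrow> R x y \<Longrightarrow> R y z \<Longrightarrow> R x z"
  unfolding ranking_def by blast
lemma rk_tot: "ranking A R \<Longrightarrow> x \<in> A \<Longrightarrow> y \<in> A \<Longrightarrow> x \<noteq> y \<Longrightarrow> \<not> R x y \<Longrightarrow> R y x"
  unfolding ranking_def by blast

lemma highest_ex:
  assumes r: "ranking A R" and f: "finite X" and ne: "X \<noteq> {}" and s: "X \<subseteq> A"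
  shows "\<exists>x\<in>X. \<forall>y\<in>X - {x}. R x y"
  using f ne s
proof (induction X rule: finite_ne_induct)
  case (singleton x) then show ?case by simp
next
  case (insert a F)
  then have FA: "F \<subseteq> A" and aA: "a \<in> A" by auto
  obtain x where x: "x \<in> F" "\<forall>y\<in>F - {x}. R x y" using insert.IH[OF FA] by blast
  have xA: "x \<in> A" using FA x(1) by blast
  show ?case
  proof (cases "R x a")
    case True
    have "\<forall>y\<in>insert a F - {x}. R x y"
    proof
      fix y assume "y \<in> insert a F - {x}"
      then have "y = a \<or> y \<in> F - {x}" by blast
      then show "R x y" using True x(2) by blast
    qed
    moreover have "x \<in> insert a F" using x(1) by blast
    ultimately show ?thesis by blast
  next
    case False
    moreover have "a \<noteq> x" using insert.hyps x(1) by blast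
    ultimately have ax: "R a x" using rk_tot[OF r xA aA] by auto
    have "\<forall>y\<in>insert a F - {a}. R a y"
    proof
      fix y assume y: "y \<in> insert a F - {a}"
      then have yF: "y \<in> F" by auto
      show "R a y"
      proof (cases "y = x")
        case True then show ?thesis using ax by simp
      next
        case False then have "R x y" using x yF by auto
        then show ?thesis using rk_trans[OF r aA xA, of y] ax yF FA by auto
      qed
    qed
    moreover have "a \<in> insert a F" by blast
    ultimately show ?thesis by blast
  qed
qed

lemma highest_prop:
  assumes r: "ranking A R" and f: "finite X" and ne: "X \<noteq> {}" and s: "X \<subseteq> A"
  shows "highest R X \<in> X \<and> (\<forall>y\<in>X - {highest R X}. R (highest R X) y)"
proof -
  obtain x where x: "x \<in> X" "\<forall>y\<in>X - {x}. R x y" using highest_ex[OF assms] by blast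
  have u: "z = x" if "z \<in> X" "\<forall>y\<in>X - {z}. R z y" for z
  proof (rule ccontr)
    assume "z \<noteq> x"
    then have "R z x" "R x z" using that x by auto
    moreover have "z \<in> A" "x \<in> A" using s that(1) x(1) by auto
    ultimately show False using rk_trans[OF r, of z x z] rk_irr[OF r, of z] by blast
  qed
  have "highest R X = x" unfolding highest_def
  proof (rule the_equality)
    show "x \<in> X \<and> (\<forall>y\<in>X - {x}. R x y)" using x by blast
  next
    fix z assume "z \<in> X \<and> (\<forall>y\<in>X - {z}. R z y)"
    then show "z = x" using u by blast
  qed
  then show ?thesis using x by simp
qed

theorem mainTheorem13:
  fixes A :: "'a set" and P R R' :: "'a \<Rightarrow> 'a \<Rightarrow> bool"
  assumes "finite A"
    and "ranking A P" and "ranking A R" and "ranking A R'"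
  shows "more_aligned A P R R' \<longleftrightarrow>
         (\<forall>X. X \<subseteq> A \<and> X \<noteq> {} \<longrightarrow>
              highest R X = highest R' X \<or> P (highest R X) (highest R' X))"
proof
  assume ma: "more_aligned A P R R'"
  show "\<forall>X. X \<subseteq> A \<and> X \<noteq> {} \<longrightarrow>
              highest R X = highest R' X \<or> P (highest R X) (highest R' X)"
  proof (intro allI impI)
    fix X assume X: "X \<subseteq> A \<and> X \<noteq> {}"
    have fX: "finite X" using X assms(1) finite_subset by blast
    define a where "a = highest R X"
    define b where "b = highest R' X"
    have a: "a \<in> X" "\<forall>y\<in>X - {a}. R a y"
      using highest_prop[OF assms(3) fX] X a_def by auto
    have b: "b \<in> X" "\<forall>y\<in>X - {b}. R' b y"
      using highest_prop[OF assms(4) fX] X b_def by auto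
    have "a = b \<or> P a b"
    proof (rule ccontr)
      assume c: "\<not> (a = b \<or> P a b)"
      have aA: "a \<in> A" "b \<in> A" using a b X by auto
      then have "P b a" using c rk_tot[OF assms(2), of a b] by auto
      moreover have "R' b a" using b a c by auto
      ultimately have "R b a" using ma aA unfolding more_aligned_def by blast
      moreover have "R a b" using a b c by auto
      ultimately show False using rk_trans[OF assms(3), of a b a] rk_irr[OF assms(3), of a] aA by auto
    qed
    then show "highest R X = highest R' X \<or> P (highest R X) (highest R' X)"
      using a_def b_def by simp
  qed
next
  assume h: "\<forall>X. X \<subseteq> A \<and> X \<noteq> {} \<longrightarrow>
              highest R X = highest R' X \<or> P (highest R X) (highest R' X)"
  show "more_aligned A P R R'"
    unfolding more_aligned_def
  proof (intro ballI impI)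
    fix x y assume xy: "x \<in> A" "y \<in> A" "P x y" "R' x y"
    have ne: "x \<noteq> y" using xy rk_irr[OF assms(2), of x] by auto
    let ?X = "{x, y}"
    have sX: "?X \<subseteq> A" "?X \<noteq> {}" "finite ?X" using xy by auto
    have b: "highest R' ?X = x"
    proof -
      have "highest R' ?X \<in> ?X \<and> (\<forall>z\<in>?X - {highest R' ?X}. R' (highest R' ?X) z)"
        using highest_prop[OF assms(4) sX(3) sX(2) sX(1)] .
      moreover have "\<not> R' y x" using xy rk_trans[OF assms(4), of x y x] rk_irr[OF assms(4), of x] by auto
      ultimately show ?thesis using ne by auto
    qed
    have a: "highest R ?X \<in> ?X \<and> (\<forall>z\<in>?X - {highest R ?X}. R (highest R ?X) z)"
      using highest_prop[OF assms(3) sX(3) sX(2) sX(1)] .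
    have hh0: "?X \<subseteq> A \<and> ?X \<noteq> {} \<longrightarrow>
         highest R ?X = highest R' ?X \<or> P (highest R ?X) (highest R' ?X)"
      using h by (rule spec)
    have sX2: "?X \<subseteq> A \<and> ?X \<noteq> {}" using sX(1) sX(2) by (rule conjI)
    have hh1: "highest R ?X = highest R' ?X \<or> P (highest R ?X) (highest R' ?X)"
      using hh0 sX2 by (rule mp)
    have hh: "highest R ?X = x \<or> P (highest R ?X) x" using hh1 unfolding b .
    show "R x y"
    proof (cases "highest R ?X = x")
      case True then show ?thesis using a ne by auto
    next
      case False
      then have "highest R ?X = y" using a by auto
      then have "P y x" using hh False by simp
      then show ?thesis using xy rk_trans[OF assms(2), of x y x] rk_irr[OF assms(2), of x] by auto
    qed
  qed
qed

end
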